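(* Let $x_1,\dots,x_N\in\mathbb{R}^q$, let $d:\mathbb{R}^q\times\mathbb{R}^q\to\mathbb{R}_{\ge 0}$ be any function, and let $k:\mathbb{R}_{\ge0}\to\mathbb{R}_{\ge0}$ be convex, non-increasing and differentiable, with $g=-k'$. Set $f(x)=\sum_{i=1}^N k(d(x,x_i))$. Let $(\hat x_n)_{n\ge0}$ satisfy: $\hat x_0\in\mathbb{R}^q$ arbitrary and, for each $n$, $\hat x_{n+1}\in\operatorname{argmin}_{x\in\mathbb{R}^q}\sum_{i=1}^N g(d(\hat x_n,x_i))\,d(x,x_i)$ (assume these minimizers exist). Then the sequence $n\mapsto f(\hat x_n)$ is non-decreasing and bounded above, hence convergent. *)

theory Defs
  imports "HOL-Analysis.Analysis"
begin

end

theory Submission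
  imports Defs
begin

lemma tangent_right:
  fixes k :: "real \<Rightarrow> real"
  assumes cv: "convex_on {0..} k" and c: "0 \<le> c" and xc: "c < x"
    and der: "(k has_real_derivative D) (at c within {0..})"
  shows "D * (x - c) \<le> k x - k c"
proof -
  have lim: "((\<lambda>y. (k y - k c) / (y - c)) \<longlongrightarrow> D) (at c within {0..})"
    using der by (simp add: has_field_derivative_iff)
  have sub: "{c<..x} \<subseteq> {0..}" using c by auto
  have lim2: "((\<lambda>y. (k y - k c) / (y - c)) \<longlongrightarrow> D) (at c within {c<..x})"
    by (rule tendsto_within_subset[OF lim sub])
  have nb: "at c within {c<..x} \<noteq> bot"
    using xc by (subst at_within_eq_bot_iff) (auto simp: closure_greaterThanAtMost)
  have pw: "\<forall>y\<in>{c<..x}. (k y - k c) / (y - c) \<le> (k x - k c) / (x - c)"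
    proof
      fix y assume y: "y \<in> {c<..x}"
      define t where "t = (y - c) / (x - c)"
      have t: "0 \<le> t" "t \<le> 1" using y xc by (auto simp: t_def field_simps)
      have tx: "t * (x - c) = y - c" using xc by (simp add: t_def)
      have yy: "y = (1 - t) * c + t * x" using tx by (simp add: algebra_simps)
      have "k ((1 - t) * c + t * x) \<le> (1 - t) * k c + t * k x"
        using convex_onD[OF cv, of t c x] t c xc by auto
      hence "k y \<le> (1 - t) * k c + t * k x" using yy by simp
      hence "k y - k c \<le> t * (k x - k c)" by (simp add: algebra_simps)
      thus "(k y - k c) / (y - c) \<le> (k x - k c) / (x - c)"
        using y xc by (simp add: t_def divide_simps mult.commute)
    qed
  have ev: "\<forall>\<^sub>F y in at c within {c<..x}. (k y - k c) / (y - c) \<le> (k x - k c) / (x - c)"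
    unfolding eventually_at_filter using pw by simp
  have "D \<le> (k x - k c) / (x - c)"
    by (rule tendsto_upperbound[OF lim2 ev nb])
  thus ?thesis using xc by (simp add: field_simps)
qed

theorem proposition1:
  fixes N :: nat
    and x :: "nat \<Rightarrow> real ^ 'q"
    and d :: "real ^ 'q \<Rightarrow> real ^ 'q \<Rightarrow> real"
    and k k' g :: "real \<Rightarrow> real"
    and f :: "real ^ 'q \<Rightarrow> real"
    and xh :: "nat \<Rightarrow> real ^ 'q"
  assumes d_nonneg: "\<And>u v. d u v \<ge> 0"
    and k_nonneg: "\<And>t. t \<ge> 0 \<Longrightarrow> k t \<ge> 0"
    and k_convex: "convex_on {0..} k"
    and k_nonincr: "\<And>s t. 0 \<le> s \<Longrightarrow> s \<le> t \<Longrightarrow> k t \<le> k s"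
    and k_deriv: "\<And>t. t \<ge> 0 \<Longrightarrow> (k has_real_derivative k' t) (at t within {0..})"
    and g_def: "\<And>t. g t = - k' t"
    and f_def: "\<And>y. f y = (\<Sum>i<N. k (d y (x i)))"
    and step: "\<And>n y. (\<Sum>i<N. g (d (xh n) (x i)) * d (xh (Suc n)) (x i))
                        \<le> (\<Sum>i<N. g (d (xh n) (x i)) * d y (x i))"
  shows "mono (\<lambda>n. f (xh n)) \<and> bdd_above (range (\<lambda>n. f (xh n)))
         \<and> convergent (\<lambda>n. f (xh n))"
proof -
  have tan: "k' a * (b - a) \<le> k b - k a" if a: "0 \<le> a" and b: "0 \<le> b" for a b
  proof (cases b a rule: linorder_cases)
    case greater thus ?thesis using tangent_right[OF k_convex a _ k_deriv[OF a]] by simp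
  next
    case equal thus ?thesis by simp
  next
    case less
    hence "a \<in> interior {0..}" using b by auto
    from convex_on_imp_above_tangent[OF k_convex _ this _ k_deriv[OF a]] b
    show ?thesis by (auto simp: mult.commute)
  qed
  have inc: "f (xh n) \<le> f (xh (Suc n))" for n
  proof -
    have "(\<Sum>i<N. g (d (xh n) (x i)) * d (xh (Suc n)) (x i))
          \<le> (\<Sum>i<N. g (d (xh n) (x i)) * d (xh n) (x i))" by (rule step)
    moreover have "(\<Sum>i<N. k' (d (xh n) (x i)) * (d (xh (Suc n)) (x i) - d (xh n) (x i)))
          \<le> (\<Sum>i<N. k (d (xh (Suc n)) (x i)) - k (d (xh n) (x i)))"
      by (rule sum_mono) (rule tan[OF d_nonneg d_nonneg])
    ultimately show ?thesis
      by (simp add: f_def g_def sum_subtractf right_diff_distrib sum_negf)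
  qed
  have mono: "mono (\<lambda>n. f (xh n))" by (rule incseq_SucI) (rule inc)
  have bnd: "f (xh n) \<le> real N * k 0" for n
  proof -
    have "f (xh n) \<le> (\<Sum>i<N. k 0)" unfolding f_def
      by (rule sum_mono) (rule k_nonincr[OF order_refl d_nonneg])
    thus ?thesis by simp
  qed
  have bdd: "bdd_above (range (\<lambda>n. f (xh n)))" by (rule bdd_aboveI[where M="real N * k 0"]) (use bnd in auto)
  have "incseq (\<lambda>n. f (xh n))" using mono by (simp add: incseq_def mono_def)
  then obtain L where "(\<lambda>n. f (xh n)) \<longlonglongrightarrow> L"
    by (rule incseq_convergent[of _ "real N * k 0"]) (use bnd in auto)
  hence "convergent (\<lambda>n. f (xh n))" by (auto simp: convergent_def)
  with mono bdd show ?thesis by simp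
qed

end
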